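(* Let $c\in C(X_A,\mathbb Z)$ be such that $[c]\in H^A_+$ is an order unit of $(H^A,H^A_+)$ (e.g. $c=l-k$ for a suspension triplet $(l,k,b)$). Then for every $m\in\mathbb N$ there exists $n_m\in\mathbb N$ such that $c^{n_m}(x)\ge m$ for all $x\in X_A$.
   Context: Let $N>1$ and $A$ an irreducible $N\times N$ $\{0,1\}$-matrix which is not a permutation matrix. $X_A$ is the compact space of sequences $(x_n)_{n\in\mathbb N}$, $x_n\in\{1,\dots,N\}$, $A(x_n,x_{n+1})=1$, and $\sigma_A((x_n)_n)=(x_{n+1})_n$. $H^A$ is the quotient of $C(X_A,\mathbb Z)$ by $\{u-u\circ\sigma_A: u\in C(X_A,\mathbb Z)\}$, $[f]$ the class of $f$, $H^A_+=\{[f]: f\in C(X_A,\mathbb Z_+)\}$ ($\mathbb Z_+$ the nonnegative integers); $[f]\in H^A_+$ is an order unit if for every $[u]\in H^A$ there is $n\in\mathbb N$ with $n[f]-[u]\in H^A_+$. For $m\in\mathbb N$, $c^m(x)=\sum_{i=0}^{m-1}c(\sigma_A^i(x))$. A suspension triplet is $(l,k,b)$ with $l,k$ continuous nonnegative real-valued, $b$ continuous real-valued, $l-k$ integer-valued with order-unit class, and $l-b$, $k-b\circ\sigma_A$ $\mathbb Z_+$-valued. *)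

theory Defs
  imports "HOL-Analysis.Analysis"
begin

text \<open>Matrices are N x N {0,1}-matrices indexed by {1..N}, represented as functions
  nat => nat => int (values outside {1..N} are irrelevant).\<close>

definition zero_one_matrix :: "nat \<Rightarrow> (nat \<Rightarrow> nat \<Rightarrow> int) \<Rightarrow> bool" where
  "zero_one_matrix N A \<longleftrightarrow> (\<forall>i\<in>{1..N}. \<forall>j\<in>{1..N}. A i j \<in> {0, 1})"

text \<open>Irreducible: for all i, j there is k > 0 with (A^k)(i,j) > 0, i.e. a path of
  length k from i to j in the transition graph of A.\<close>
definition irreducible_matrix :: "nat \<Rightarrow> (nat \<Rightarrow> nat \<Rightarrow> int) \<Rightarrow> bool" where
  "irreducible_matrix N A \<longleftrightarrow>
     (\<forall>i\<in>{1..N}. \<forall>j\<in>{1..N}. \<exists>k>0. \<exists>p::nat \<Rightarrow> nat.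
        p 0 = i \<and> p k = j \<and> (\<forall>t\<le>k. p t \<in> {1..N}) \<and> (\<forall>t<k. A (p t) (p (Suc t)) = 1))"

definition permutation_matrix :: "nat \<Rightarrow> (nat \<Rightarrow> nat \<Rightarrow> int) \<Rightarrow> bool" where
  "permutation_matrix N A \<longleftrightarrow>
     (\<forall>i\<in>{1..N}. \<forall>j\<in>{1..N}. A i j \<in> {0, 1}) \<and>
     (\<forall>i\<in>{1..N}. \<exists>!j. j \<in> {1..N} \<and> A i j = 1) \<and>
     (\<forall>j\<in>{1..N}. \<exists>!i. i \<in> {1..N} \<and> A i j = 1)"

text \<open>The one-sided topological Markov shift X_A (product topology on nat => nat,
  nat carrying its discrete topology) and the shift map.\<close>
definition XA :: "nat \<Rightarrow> (nat \<Rightarrow> nat \<Rightarrow> int) \<Rightarrow> (nat \<Rightarrow> nat) set" where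
  "XA N A = {x. (\<forall>n. x n \<in> {1..N}) \<and> (\<forall>n. A (x n) (x (Suc n)) = 1)}"

definition sigmaA :: "(nat \<Rightarrow> nat) \<Rightarrow> (nat \<Rightarrow> nat)" where
  "sigmaA x = (\<lambda>n. x (Suc n))"

definition CZ :: "nat \<Rightarrow> (nat \<Rightarrow> nat \<Rightarrow> int) \<Rightarrow> ((nat \<Rightarrow> nat) \<Rightarrow> int) set" where
  "CZ N A = {f. continuous_on (XA N A) f}"

text \<open>[f] \<in> H^A_+ : f is cohomologous (in C(X_A,Z)) to a nonnegative continuous function.\<close>
definition in_HA_plus :: "nat \<Rightarrow> (nat \<Rightarrow> nat \<Rightarrow> int) \<Rightarrow> ((nat \<Rightarrow> nat) \<Rightarrow> int) \<Rightarrow> bool" where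
  "in_HA_plus N A f \<longleftrightarrow>
     (\<exists>g\<in>CZ N A. \<exists>u\<in>CZ N A. (\<forall>x\<in>XA N A. g x \<ge> 0 \<and> f x - g x = u x - u (sigmaA x)))"

definition order_unit :: "nat \<Rightarrow> (nat \<Rightarrow> nat \<Rightarrow> int) \<Rightarrow> ((nat \<Rightarrow> nat) \<Rightarrow> int) \<Rightarrow> bool" where
  "order_unit N A c \<longleftrightarrow> in_HA_plus N A c \<and>
     (\<forall>u\<in>CZ N A. \<exists>n::nat. in_HA_plus N A (\<lambda>x. int n * c x - u x))"

definition birkhoff_sum :: "((nat \<Rightarrow> nat) \<Rightarrow> int) \<Rightarrow> nat \<Rightarrow> (nat \<Rightarrow> nat) \<Rightarrow> int" where
  "birkhoff_sum c m x = (\<Sum>i<m. c ((sigmaA ^^ i) x))"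

end

theory Submission imports Defs begin

lemma op: "open (S :: (nat \<times> nat) set)"
proof (rule open_prod_intro)
  fix x assume "x \<in> S"
  then show "\<exists>A B. open A \<and> open B \<and> x \<in> A \<times> B \<and> A \<times> B \<subseteq> S"
    by (intro exI[of _ "{fst x}"] exI[of _ "{snd x}"]) (auto simp: open_discrete)
qed
lemma cl: "closed (S :: (nat \<times> nat) set)"
  unfolding closed_def by (rule op)
lemma clA: "closed {x::nat\<Rightarrow>nat. A (x n) (x (Suc n)) = (1::int)}"
proof -
  have "continuous_on UNIV (\<lambda>x::nat\<Rightarrow>nat. (x n, x (Suc n)))"
    by (intro continuous_intros continuous_on_product_coordinates)
  then have "closed (UNIV \<inter> (\<lambda>x::nat\<Rightarrow>nat. (x n, x (Suc n))) -` {p. A (fst p) (snd p) = 1})"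
    by (intro continuous_closed_preimage) (auto intro: cl)
  then show ?thesis by (simp add: vimage_def)
qed

lemma aux_ineq: "\<lbrakk>(D::int) \<le> P - int K; int K = 2*B + Q + 1; -2*B \<le> D\<rbrakk> \<Longrightarrow> Q + 1 \<le> P"
  by linarith

lemma XA_eq: "XA N A = PiE UNIV (\<lambda>_::nat. {1..N}) \<inter> (\<Inter>n. {x::nat\<Rightarrow>nat. A (x n) (x (Suc n)) = 1})"
  unfolding XA_def by (auto simp: PiE_iff)

lemma XA_compact: "compact (XA N A)"
proof -
  have "compactin (product_topology (\<lambda>_. euclidean) UNIV) (PiE UNIV (\<lambda>_::nat. {1..N::nat}))"
    by (simp add: compactin_PiE finite_imp_compact)
  then have "compact (PiE UNIV (\<lambda>_::nat. {1..N::nat}))" by (simp add: euclidean_product_topology)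
  moreover have "closed (\<Inter>n. {x::nat\<Rightarrow>nat. A (x n) (x (Suc n)) = 1})"
    by (intro closed_INT ballI clA)
  ultimately show ?thesis unfolding XA_eq by (rule compact_Int_closed)
qed

lemma CZ_bounded:
  assumes "u \<in> CZ N A"
  shows "\<exists>B::int. B \<ge> 0 \<and> (\<forall>x\<in>XA N A. \<bar>u x\<bar> \<le> B)"
proof -
  have "compact ((\<lambda>x. real_of_int (u x)) ` XA N A)"
    using assms XA_compact unfolding CZ_def by (intro compact_continuous_image continuous_on_of_int) auto
  then have "bounded ((\<lambda>x. real_of_int (u x)) ` XA N A)" by (rule compact_imp_bounded)
  then obtain B where B: "\<forall>y\<in>(\<lambda>x. real_of_int (u x)) ` XA N A. norm y \<le> B" by (meson bounded_iff)
  show ?thesis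
  proof (intro exI[of _ "max 0 \<lceil>B\<rceil>"] conjI ballI)
    fix x assume "x \<in> XA N A"
    then have "\<bar>real_of_int (u x)\<bar> \<le> B" using B by auto
    also have "B \<le> real_of_int \<lceil>B\<rceil>" by (rule le_of_int_ceiling)
    finally have "real_of_int \<bar>u x\<bar> \<le> real_of_int \<lceil>B\<rceil>" by simp
    then have "\<bar>u x\<bar> \<le> \<lceil>B\<rceil>" by (simp only: of_int_le_iff)
    then show "\<bar>u x\<bar> \<le> max 0 \<lceil>B\<rceil>" by simp
  qed simp
qed

lemma sigma_XA: "x \<in> XA N A \<Longrightarrow> sigmaA x \<in> XA N A"
  unfolding XA_def sigmaA_def by auto

lemma sigma_pow_XA: "x \<in> XA N A \<Longrightarrow> (sigmaA ^^ i) x \<in> XA N A"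
  by (induction i) (auto intro: sigma_XA)

theorem lemma2p2:
  fixes N :: nat and A :: "nat \<Rightarrow> nat \<Rightarrow> int" and c :: "(nat \<Rightarrow> nat) \<Rightarrow> int"
  assumes "N > 1"
    and "zero_one_matrix N A"
    and "irreducible_matrix N A"
    and "\<not> permutation_matrix N A"
    and "c \<in> CZ N A"
    and "order_unit N A c"
  shows "\<forall>m::nat. \<exists>n::nat. \<forall>x\<in>XA N A. birkhoff_sum c n x \<ge> int m"
proof
  fix m :: nat
  have one: "(\<lambda>x. 1::int) \<in> CZ N A" unfolding CZ_def by simp
  have "\<forall>u\<in>CZ N A. \<exists>n::nat. in_HA_plus N A (\<lambda>x. int n * c x - u x)"
    using assms(6) unfolding order_unit_def by blast
  from bspec[OF this one]
  obtain n :: nat where "in_HA_plus N A (\<lambda>x. int n * c x - 1)" by blast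
  then obtain g u where g: "g \<in> CZ N A" and u: "u \<in> CZ N A"
    and eq: "\<And>x. x \<in> XA N A \<Longrightarrow> g x \<ge> 0 \<and> int n * c x - 1 - g x = u x - u (sigmaA x)"
    unfolding in_HA_plus_def by blast
  obtain B where B0: "B \<ge> 0" and B: "\<And>x. x \<in> XA N A \<Longrightarrow> \<bar>u x\<bar> \<le> B"
    using CZ_bounded[OF u] by blast
  have tel: "int n * birkhoff_sum c K x - int K \<ge> u x - u ((sigmaA ^^ K) x)"
    if x: "x \<in> XA N A" for K x
  proof (induction K)
    case 0 then show ?case by (simp add: birkhoff_sum_def)
  next
    case (Suc K)
    have xk: "(sigmaA ^^ K) x \<in> XA N A" using sigma_pow_XA[OF x] .
    have s: "int n * birkhoff_sum c (Suc K) x - int (Suc K)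
        = (int n * birkhoff_sum c K x - int K) + (int n * c ((sigmaA ^^ K) x) - 1)"
      by (simp add: birkhoff_sum_def algebra_simps)
    have ge: "int n * c ((sigmaA ^^ K) x) - 1 \<ge> u ((sigmaA ^^ K) x) - u ((sigmaA ^^ Suc K) x)"
      using eq[OF xk] by simp
    show ?case using Suc.IH s ge by linarith
  qed
  define K where "K = nat (2*B) + n * m + 1"
  show "\<exists>n::nat. \<forall>x\<in>XA N A. birkhoff_sum c n x \<ge> int m"
  proof (intro exI[of _ K] ballI)
    fix x assume x: "x \<in> XA N A"
    have "\<bar>u x\<bar> \<le> B" "\<bar>u ((sigmaA ^^ K) x)\<bar> \<le> B"
      using B[OF x] B[OF sigma_pow_XA[OF x]] by simp_all
    have t: "int n * birkhoff_sum c K x - int K \<ge> u x - u ((sigmaA ^^ K) x)"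
      using tel[OF x, of K] .
    have iK: "int K = 2*B + int n * int m + 1"
      unfolding K_def using B0 by (simp add: of_nat_add)
    have h: "int n * birkhoff_sum c K x \<ge> int n * int m + 1"
    proof -
      have d: "u x - u ((sigmaA ^^ K) x) \<ge> - 2*B"
        using \<open>\<bar>u x\<bar> \<le> B\<close> \<open>\<bar>u ((sigmaA ^^ K) x)\<bar> \<le> B\<close> by (simp add: abs_le_iff)
      show ?thesis by (rule aux_ineq[OF t iK d])
    qed
    show "birkhoff_sum c K x \<ge> int m"
    proof (rule ccontr)
      assume "\<not> birkhoff_sum c K x \<ge> int m"
      then have "birkhoff_sum c K x \<le> int m" by simp
      then have "int n * birkhoff_sum c K x \<le> int n * int m"
        by (rule mult_left_mono) simp
      with h show False by linarith
    qed
  qed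
qed

end
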